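(* Let $m\in\mathbb{Z}$ be odd and let $(d,v)\in\mathbb{Z}^2$ with $d>0$. There is no decomposition $(d,v)=(d_1,v_1)+(d_2,v_2)$ in $\mathbb{Z}^2$ with $d_1,d_2>0$ satisfying $$\frac{w_1}{d_1}=\frac{w_2}{d_2},\qquad w_1:=v_1-\frac m2d_1d_2,\quad w_2:=v_2+\frac m2d_1d_2,$$ if and only if either $\gcd(d,v)=1$ and $d\not\equiv2\pmod4$, or $\gcd(d,v)=2$ and $d\equiv2\pmod4$. *)

theory Defs
  imports Complex_Main
begin

end

theory Submission
  imports Defs
begin

lemma reduce_eq:
  fixes m pp qq xx yy :: int
  assumes "pp > 0" "qq > 0"
  shows "((real_of_int xx - real_of_int m / 2 * real_of_int pp * real_of_int qq) / real_of_int pp =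
              (real_of_int yy + real_of_int m / 2 * real_of_int pp * real_of_int qq) / real_of_int qq)
         \<longleftrightarrow> 2*(qq*xx - pp*yy) = m*pp*qq*(pp+qq)"
proof -
  have "((real_of_int xx - real_of_int m / 2 * real_of_int pp * real_of_int qq) / real_of_int pp =
              (real_of_int yy + real_of_int m / 2 * real_of_int pp * real_of_int qq) / real_of_int qq)
    \<longleftrightarrow> real_of_int (2*(qq*xx - pp*yy)) = real_of_int (m*pp*qq*(pp+qq))"
    using assms by (simp add: field_simps) (auto simp: algebra_simps)
  also have "\<dots> \<longleftrightarrow> 2*(qq*xx - pp*yy) = m*pp*qq*(pp+qq)" by (rule of_int_eq_iff)
  finally show ?thesis .
qed

lemma reduce_ex:
  fixes m d v :: int
  assumes "d > 0"
  shows "(\<exists>d1 v1 d2 v2 :: int.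
              d = d1 + d2 \<and> v = v1 + v2 \<and> d1 > 0 \<and> d2 > 0 \<and>
              (real_of_int v1 - real_of_int m / 2 * real_of_int d1 * real_of_int d2) / real_of_int d1 =
              (real_of_int v2 + real_of_int m / 2 * real_of_int d1 * real_of_int d2) / real_of_int d2)
    \<longleftrightarrow> (\<exists>d1 v1. 0 < d1 \<and> d1 < d \<and> 2*(d*v1 - d1*v) = m*d1*(d-d1)*d)"
proof
  assume "\<exists>d1 v1 d2 v2 :: int.
              d = d1 + d2 \<and> v = v1 + v2 \<and> d1 > 0 \<and> d2 > 0 \<and>
              (real_of_int v1 - real_of_int m / 2 * real_of_int d1 * real_of_int d2) / real_of_int d1 =
              (real_of_int v2 + real_of_int m / 2 * real_of_int d1 * real_of_int d2) / real_of_int d2"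
  then obtain d1 v1 d2 v2 where h: "d = d1 + d2" "v = v1 + v2" "d1 > 0" "d2 > 0"
    "2*(d2*v1 - d1*v2) = m*d1*d2*(d1+d2)" using reduce_eq by blast
  have "2*(d*v1 - d1*v) = m*d1*(d-d1)*d" using h by (simp add: algebra_simps)
  thus "\<exists>d1 v1. 0 < d1 \<and> d1 < d \<and> 2*(d*v1 - d1*v) = m*d1*(d-d1)*d" using h by (intro exI[of _ d1] exI[of _ v1]) simp
next
  assume "\<exists>d1 v1. 0 < d1 \<and> d1 < d \<and> 2*(d*v1 - d1*v) = m*d1*(d-d1)*d"
  then obtain d1 v1 where h: "0 < d1" "d1 < d" "2*(d*v1 - d1*v) = m*d1*(d-d1)*d" by blast
  have "2*((d-d1)*v1 - d1*(v-v1)) = m*d1*(d-d1)*(d1+(d-d1))" using h by (simp add: algebra_simps)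
  hence "(real_of_int v1 - real_of_int m / 2 * real_of_int d1 * real_of_int (d-d1)) / real_of_int d1 =
              (real_of_int (v-v1) + real_of_int m / 2 * real_of_int d1 * real_of_int (d-d1)) / real_of_int (d-d1)"
    using reduce_eq[where pp=d1 and qq="d-d1" and m=m and xx=v1 and yy="v-v1"] h by (simp only: of_int_diff)
  thus "\<exists>d1 v1 d2 v2 :: int.
              d = d1 + d2 \<and> v = v1 + v2 \<and> d1 > 0 \<and> d2 > 0 \<and>
              (real_of_int v1 - real_of_int m / 2 * real_of_int d1 * real_of_int d2) / real_of_int d1 =
              (real_of_int v2 + real_of_int m / 2 * real_of_int d1 * real_of_int d2) / real_of_int d2"
    using h by (intro exI[of _ d1] exI[of _ v1] exI[of _ "d-d1"] exI[of _ "v-v1"]) auto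
qed


lemma A1:
  fixes m d v d1 v1 :: int
  assumes "gcd d v = 1" "odd d" "0 < d1" "d1 < d" "2*(d*v1 - d1*v) = m*d1*(d-d1)*d"
  shows False
proof -
  have "d1*(2*v) = d*(2*v1 - m*d1*(d-d1))" using assms(5) by (simp add: algebra_simps)
  hence "d dvd d1*(2*v)" by (rule dvdI)
  moreover have "coprime d (2*v)"
  proof -
    have c1: "coprime d v" using assms(1) by (simp only: coprime_iff_gcd_eq_1)
    have c2: "coprime d 2" using assms(2) by simp
    show ?thesis using c1 c2 by (simp only: coprime_mult_right_iff)
  qed
  ultimately have "d dvd d1" using coprime_dvd_mult_left_iff by blast
  thus False using assms(3,4) zdvd_imp_le by fastforce
qed


lemma A2:
  fixes m d v d1 v1 :: int
  assumes "gcd d v = 1" "d mod 4 = 0" "0 < d1" "d1 < d" "2*(d*v1 - d1*v) = m*d1*(d-d1)*d"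
  shows False
proof -
  have "2*d1*v = d*(2*v1 - m*d1*(d-d1))" using assms(5) by (simp add: algebra_simps)
  hence "d dvd (2*d1)*v" by (rule dvdI)
  moreover have "coprime d v" using assms(1) by (simp add: coprime_iff_gcd_eq_1)
  ultimately have "d dvd 2*d1" using coprime_dvd_mult_left_iff by blast
  then obtain k where k: "2*d1 = d*k" by blast
  have "d > 0" using assms by simp
  have "0 < d*k" using k assms(3) by linarith
  hence "k > 0" using \<open>d>0\<close> by (simp add: zero_less_mult_iff)
  have "d*k < d*2" using k assms(4) by linarith
  hence "k < 2" using \<open>d>0\<close> by simp
  hence "k = 1" using \<open>k>0\<close> by simp
  hence dd: "d = 2*d1" using k by simp
  have "d1*(2*(2*v1 - v)) = d1*(2*(m*d1*d1))" using assms(5) unfolding dd by (simp add: algebra_simps)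
  hence e: "2*v1 - v = m*d1*d1" using assms(3) by simp
  have "even d1" using assms(2) dd by presburger
  moreover have "v = 2*v1 - m*d1*d1" using e by linarith
  ultimately have "even v" by simp
  moreover have "even d" using dd by simp
  ultimately have "2 dvd gcd d v" by simp
  thus False using assms(1) by simp
qed

lemma A3:
  fixes m d v d1 v1 :: int
  assumes "odd m" "gcd d v = 2" "d mod 4 = 2" "0 < d1" "d1 < d" "2*(d*v1 - d1*v) = m*d1*(d-d1)*d"
  shows False
proof -
  have "2 dvd d" "2 dvd v" using assms(2) by (metis gcd_dvd1 gcd_dvd2)+
  then obtain e w where ew: "d = 2*e" "v = 2*w" by blast
  have "gcd (2*e) (2*w) = 2 * gcd e w" using gcd_mult_distrib_int[of 2 e w] by simp
  hence "2 * gcd e w = 2" using assms(2) ew by simp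
  hence g: "gcd e w = 1" by simp
  have oe: "odd e" using assms(3) ew by presburger
  have "2*(2*(e*v1 - d1*w)) = 2*(m*d1*(2*e-d1)*e)" using assms(6) ew by (simp add: algebra_simps)
  hence eq: "2*(e*v1 - d1*w) = m*d1*(2*e-d1)*e" by simp
  have "d1*(2*w) = e*(2*v1 - m*d1*(2*e-d1))" using eq by (simp add: algebra_simps)
  hence "e dvd d1*(2*w)" by (rule dvdI)
  moreover have "coprime e (2*w)"
  proof -
    have c1: "coprime e w" using g by (simp only: coprime_iff_gcd_eq_1)
    have c2: "coprime e 2" using oe by simp
    show ?thesis using c1 c2 by (simp only: coprime_mult_right_iff)
  qed
  ultimately have "e dvd d1" using coprime_dvd_mult_left_iff by blast
  then obtain k where k: "d1 = e*k" by blast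
  have "e > 0" using assms ew by simp
  have "k > 0" using k assms(4) \<open>e>0\<close> by (simp add: zero_less_mult_iff)
  have "e*k < e*2" using k assms(5) ew by linarith
  hence "k < 2" using \<open>e>0\<close> by simp
  hence "k = 1" using \<open>k>0\<close> by simp
  hence dd: "d1 = e" using k by simp
  have "e*(2*(v1 - w)) = e*(m*e*e)" using eq unfolding dd by (simp add: algebra_simps)
  hence "2*(v1 - w) = m*e*e" using \<open>e>0\<close> by simp
  hence "even (m*e*e)" by (metis dvd_triv_left)
  thus False using assms(1) oe by simp
qed

lemma B1:
  fixes m d v :: int
  assumes "odd m" "d > 0" "gcd d v = 1" "d mod 4 = 2"
  shows "\<exists>d1 v1. 0 < d1 \<and> d1 < d \<and> 2*(d*v1 - d1*v) = m*d1*(d-d1)*d"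
proof -
  have "even d" using assms(4) by presburger
  then obtain e where e: "d = 2*e" by blast
  have oe: "odd e" using assms(4) e by presburger
  have ov: "odd v"
  proof
    assume "even v" hence "2 dvd gcd d v" using e by simp
    thus False using assms(3) by simp
  qed
  have "even (v + m*e^2)" using ov oe assms(1) by simp
  then obtain t where t: "v + m*e^2 = 2*t" by blast
  have "0 < e" "e < d" using e assms(2) by simp_all
  moreover have "2*(d*t - e*v) = m*e*(d-e)*d"
  proof -
    have "2*(d*t - e*v) = 2*e*(2*t - v)" using e by (simp add: algebra_simps)
    also have "\<dots> = 2*e*(m*e^2)" using t by simp
    also have "\<dots> = m*e*(d-e)*d" using e by (simp add: algebra_simps power2_eq_square)
    finally show ?thesis .
  qed
  ultimately show ?thesis by blast
qed

lemma B2: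
  fixes m d v :: int
  assumes "d > 0" "gcd d v = 2" "d mod 4 \<noteq> 2"
  shows "\<exists>d1 v1. 0 < d1 \<and> d1 < d \<and> 2*(d*v1 - d1*v) = m*d1*(d-d1)*d"
proof -
  have "2 dvd d" "2 dvd v" using assms(2) by (metis gcd_dvd1 gcd_dvd2)+
  then obtain a b where ab: "d = 2*a" "v = 2*b" by blast
  have "even a" using assms(3) ab by presburger
  then obtain c where c: "a = 2*c" by blast
  have "0 < a" "a < d" using ab assms(1) by simp_all
  moreover have "2*(d*(b + m*a*c) - a*v) = m*a*(d-a)*d" using ab c by (simp add: algebra_simps)
  ultimately show ?thesis by blast
qed

lemma B3:
  fixes m d v :: int
  assumes "d > 0" "gcd d v \<ge> 3"
  shows "\<exists>d1 v1. 0 < d1 \<and> d1 < d \<and> 2*(d*v1 - d1*v) = m*d1*(d-d1)*d"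
proof -
  define g where "g = gcd d v"
  have "g dvd d" "g dvd v" unfolding g_def by simp_all
  then obtain a b where ab: "d = g*a" "v = g*b" by blast
  have g3: "g \<ge> 3" using assms g_def by simp
  have "a > 0" using ab assms(1) g3 by (simp add: zero_less_mult_iff)
  have "0 < 2*a" using \<open>a>0\<close> by simp
  moreover have "2*a < g*a" using g3 \<open>a>0\<close> by (intro mult_strict_right_mono) simp_all
  hence "2*a < d" using ab by simp
  moreover have "2*(d*(2*b + m*(g-2)*a^2) - (2*a)*v) = m*(2*a)*(d-2*a)*d"
    using ab by (simp add: algebra_simps power2_eq_square)
  ultimately show ?thesis by blast
qed

theorem lemma8p7:
  fixes m d v :: int
  assumes "odd m" and "d > 0"
  shows "(\<not> (\<exists>d1 v1 d2 v2 :: int.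
              d = d1 + d2 \<and> v = v1 + v2 \<and> d1 > 0 \<and> d2 > 0 \<and>
              (real_of_int v1 - real_of_int m / 2 * real_of_int d1 * real_of_int d2) / real_of_int d1 =
              (real_of_int v2 + real_of_int m / 2 * real_of_int d1 * real_of_int d2) / real_of_int d2))
    \<longleftrightarrow> ((gcd d v = 1 \<and> \<not> d mod 4 = 2) \<or> (gcd d v = 2 \<and> d mod 4 = 2))"
  unfolding reduce_ex[OF assms(2)]
proof
  assume H: "\<not> (\<exists>d1 v1. 0 < d1 \<and> d1 < d \<and> 2*(d*v1 - d1*v) = m*d1*(d-d1)*d)"
  have "gcd d v \<noteq> 0" using assms(2) by simp
  hence "gcd d v = 1 \<or> gcd d v = 2 \<or> gcd d v \<ge> 3" using gcd_ge_0_int[of d v] by linarith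
  show "(gcd d v = 1 \<and> \<not> d mod 4 = 2) \<or> (gcd d v = 2 \<and> d mod 4 = 2)"
  proof (rule ccontr)
    assume nC: "\<not> ((gcd d v = 1 \<and> \<not> d mod 4 = 2) \<or> (gcd d v = 2 \<and> d mod 4 = 2))"
    show False
    proof (cases "gcd d v = 1")
      case True
      hence "d mod 4 = 2" using nC by auto
      thus False using H B1[OF assms(1,2) True] by blast
    next
      case F1: False
      show False
      proof (cases "gcd d v = 2")
        case True
        hence "d mod 4 \<noteq> 2" using nC by auto
        thus False using H B2[OF assms(2) True] by blast
      next
        case False
        hence "gcd d v \<ge> 3" using F1 \<open>gcd d v = 1 \<or> gcd d v = 2 \<or> gcd d v \<ge> 3\<close> by blast
        thus False using H B3[OF assms(2)] by blast
      qed
    qed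
  qed
next
  assume C: "(gcd d v = 1 \<and> \<not> d mod 4 = 2) \<or> (gcd d v = 2 \<and> d mod 4 = 2)"
  show "\<not> (\<exists>d1 v1. 0 < d1 \<and> d1 < d \<and> 2*(d*v1 - d1*v) = m*d1*(d-d1)*d)"
  proof
    assume "\<exists>d1 v1. 0 < d1 \<and> d1 < d \<and> 2*(d*v1 - d1*v) = m*d1*(d-d1)*d"
    then obtain d1 v1 where h: "0 < d1" "d1 < d" "2*(d*v1 - d1*v) = m*d1*(d-d1)*d" by blast
    show False
    proof (cases "gcd d v = 1")
      case True
      hence n2: "d mod 4 \<noteq> 2" using C by auto
      show False
      proof (cases "odd d")
        case True
        show False using A1[OF \<open>gcd d v = 1\<close> True h] .
      next
        case False
        hence m4: "d mod 4 = 0" using n2 by presburger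
        show False by (rule A2[OF \<open>gcd d v = 1\<close> m4 h])
      qed
    next
      case False
      hence c2: "gcd d v = 2" and c4: "d mod 4 = 2" using C by auto
      show False by (rule A3[OF assms(1) c2 c4 h])
    qed
  qed
qed

end
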